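(* For every integer $d\geq2$, $R_{2,d}(W_2\otimes W_d)=2d$.
   Context: Identify $S^d\mathbb{C}^2$ with binary forms of degree $d$ in a basis $\{x,y\}$; $W_d=x^{d-1}y$. The partially symmetric rank $R_{2,d}(T)$ of $T\in S^2\mathbb{C}^2\otimes S^d\mathbb{C}^2$ is the minimal $r$ with $T=\sum_{i=1}^r v_{i,1}^{\otimes 2}\otimes v_{i,2}^{\otimes d}$, $v_{i,j}\in\mathbb{C}^2$. *)

theory Defs
  imports Complex_Main
begin

text \<open>Binary forms: a vector v = (a,b) in C^2 gives the linear form a*x + b*y;
  v^{tensor d} in S^d C^2 is identified with the binary form (a*x+b*y)^d.
  An element of S^a C^2 (x) S^b C^2 is identified with a bihomogeneous form
  F(x,y,x',y') of bidegree (a,b), represented by its polynomial function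
  (over the infinite field C this determines the polynomial).\<close>

definition linf :: "complex \<times> complex \<Rightarrow> complex \<Rightarrow> complex \<Rightarrow> complex" where
  "linf v x y = fst v * x + snd v * y"

definition W :: "nat \<Rightarrow> complex \<Rightarrow> complex \<Rightarrow> complex" where
  "W d x y = x ^ (d - 1) * y"

definition psrank :: "nat \<Rightarrow> nat \<Rightarrow>
    (complex \<Rightarrow> complex \<Rightarrow> complex \<Rightarrow> complex \<Rightarrow> complex) \<Rightarrow> nat" where
  "psrank a b T = (LEAST r. \<exists>v1 v2 :: nat \<Rightarrow> complex \<times> complex.
     \<forall>x y x' y'. T x y x' y' = (\<Sum>i<r. linf (v1 i) x y ^ a * linf (v2 i) x' y' ^ b))"

end

theory Submission
  imports Defs "HOL-Analysis.Complex_Transcendental"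
begin

lemma homog_exists:
  fixes A :: "nat \<Rightarrow> 'a \<Rightarrow> complex"
  assumes "finite J" "n < card J"
  shows "\<exists>x. (\<exists>j\<in>J. x j \<noteq> 0) \<and> (\<forall>i<n. (\<Sum>j\<in>J. A i j * x j) = 0)"
  using assms
proof (induction n arbitrary: A J)
  case 0
  then obtain j where "j \<in> J" by (metis card.empty equals0I less_irrefl)
  then show ?case by (intro exI[of _ "\<lambda>_. 1"]) auto
next
  case (Suc n)
  show ?case
  proof (cases "\<forall>j\<in>J. A n j = 0")
    case True
    from Suc.IH[of J A] Suc.prems obtain x where
      x: "\<exists>j\<in>J. x j \<noteq> 0" "\<forall>i<n. (\<Sum>j\<in>J. A i j * x j) = 0" by auto
    show ?thesis
      using x True by (intro exI[of _ x]) (auto simp: less_Suc_eq)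
  next
    case False
    then obtain j0 where j0: "j0 \<in> J" "A n j0 \<noteq> 0" by auto
    define J' where "J' = J - {j0}"
    define B where "B i j = A i j - A i j0 * A n j / A n j0" for i j
    have fJ': "finite J'" using Suc.prems J'_def by auto
    have cJ': "n < card J'" using Suc.prems j0 J'_def by auto
    from Suc.IH[OF fJ' cJ', of B] obtain x where
      x: "\<exists>j\<in>J'. x j \<noteq> 0" "\<forall>i<n. (\<Sum>j\<in>J'. B i j * x j) = 0" by auto
    define S where "S = (\<Sum>j\<in>J'. A n j * x j)"
    define x' where "x' = x(j0 := - S / A n j0)"
    have split: "(\<Sum>j\<in>J. A i j * x' j) = A i j0 * x' j0 + (\<Sum>j\<in>J'. A i j * x j)" for i
    proof -
      have "(\<Sum>j\<in>J. A i j * x' j) = A i j0 * x' j0 + (\<Sum>j\<in>J'. A i j * x' j)"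
        using Suc.prems j0 J'_def by (simp add: sum.remove)
      moreover have "(\<Sum>j\<in>J'. A i j * x' j) = (\<Sum>j\<in>J'. A i j * x j)"
        by (rule sum.cong) (auto simp: x'_def J'_def)
      ultimately show ?thesis by simp
    qed
    have "\<forall>i<Suc n. (\<Sum>j\<in>J. A i j * x' j) = 0"
    proof (intro allI impI)
      fix i assume i: "i < Suc n"
      show "(\<Sum>j\<in>J. A i j * x' j) = 0"
      proof (cases "i = n")
        case True
        then show ?thesis using split[of n] j0 by (simp add: x'_def S_def)
      next
        case False
        then have "i < n" using i by simp
        then have "(\<Sum>j\<in>J'. B i j * x j) = 0" using x by auto
        moreover have "(\<Sum>j\<in>J'. B i j * x j) = (\<Sum>j\<in>J'. A i j * x j) - A i j0 / A n j0 * S"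
          by (simp add: B_def S_def algebra_simps sum_subtractf sum_distrib_left sum_divide_distrib)
        ultimately show ?thesis using split[of i] j0 by (simp add: x'_def field_simps)
      qed
    qed
    moreover have "\<exists>j\<in>J. x' j \<noteq> 0" using x J'_def by (auto simp: x'_def)
    ultimately show ?thesis by blast
  qed
qed

lemma expand_pow:
  fixes c u v :: "nat \<Rightarrow> complex"
  shows "(\<Sum>i<r. c i * (u i + v i * t)^d) =
         (\<Sum>k\<le>d. (of_nat (d choose k) * (\<Sum>i<r. c i * u i^(d-k) * v i^k)) * t^k)"
proof -
  have "(\<Sum>i<r. c i * (u i + v i * t)^d) =
        (\<Sum>i<r. \<Sum>k\<le>d. (of_nat (d choose k) * (c i * u i^(d-k) * v i^k)) * t^k)"
  proof (rule sum.cong[OF refl])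
    fix i
    have "(u i + v i * t)^d = (v i * t + u i)^d" by (simp add: add.commute)
    also have "\<dots> = (\<Sum>k\<le>d. of_nat (d choose k) * (v i * t)^k * u i^(d-k))"
      by (rule binomial_ring)
    finally show "c i * (u i + v i * t)^d =
        (\<Sum>k\<le>d. (of_nat (d choose k) * (c i * u i^(d-k) * v i^k)) * t^k)"
      by (simp add: sum_distrib_left power_mult_distrib mult_ac)
  qed
  also have "\<dots> = (\<Sum>k\<le>d. \<Sum>i<r. (of_nat (d choose k) * (c i * u i^(d-k) * v i^k)) * t^k)"
    by (rule sum.swap)
  also have "\<dots> = (\<Sum>k\<le>d. (of_nat (d choose k) * (\<Sum>i<r. c i * u i^(d-k) * v i^k)) * t^k)"
    by (simp add: sum_distrib_left sum_distrib_right)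
  finally show ?thesis .
qed

lemma coeffs_zero:
  fixes c u v :: "nat \<Rightarrow> complex"
  assumes "\<forall>t. (\<Sum>i<r. c i * (u i + v i * t)^d) = 0" "k \<le> d"
  shows "(\<Sum>i<r. c i * u i^(d-k) * v i^k) = 0"
proof -
  have "\<forall>t. (\<Sum>k\<le>d. (of_nat (d choose k) * (\<Sum>i<r. c i * u i^(d-k) * v i^k)) * t^k) = 0"
    using assms(1) by (simp add: expand_pow)
  then have "of_nat (d choose k) * (\<Sum>i<r. c i * u i^(d-k) * v i^k) = 0"
    using assms(2) by (subst (asm) polyfun_eq_0) simp
  moreover have "(of_nat (d choose k) :: complex) \<noteq> 0" using assms(2) by simp
  ultimately show ?thesis by simp
qed

lemma coeffs_lin:
  fixes c u v :: "nat \<Rightarrow> complex"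
  assumes "\<forall>t. (\<Sum>i<r. c i * (u i + v i * t)^d) = t" "k \<le> d" "1 \<le> d"
  shows "of_nat (d choose k) * (\<Sum>i<r. c i * u i^(d-k) * v i^k) = (if k = 1 then 1 else 0)"
proof -
  have e: "(\<Sum>k\<le>d. (if k = 1 then 1 else 0) * t^k) = t" for t :: complex
  proof -
    have "(\<Sum>k\<le>d. (if k = 1 then 1 else 0) * t^k) = (\<Sum>k\<le>d. if k = 1 then t^k else 0)"
      by (rule sum.cong) auto
    also have "\<dots> = t" using assms(3) by (subst sum.delta) auto
    finally show ?thesis .
  qed
  have "\<forall>t. (\<Sum>k\<le>d. (of_nat (d choose k) * (\<Sum>i<r. c i * u i^(d-k) * v i^k)) * t^k) =
            (\<Sum>k\<le>d. (if k = 1 then 1 else 0) * t^k)"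
  proof
    fix t :: complex
    have "(\<Sum>k\<le>d. (of_nat (d choose k) * (\<Sum>i<r. c i * u i^(d-k) * v i^k)) * t^k) =
          (\<Sum>i<r. c i * (u i + v i * t)^d)" by (simp add: expand_pow)
    also have "\<dots> = t" using assms(1) by simp
    also have "\<dots> = (\<Sum>k\<le>d. (if k = 1 then 1 else 0) * t^k)" using e by simp
    finally show "(\<Sum>k\<le>d. (of_nat (d choose k) * (\<Sum>i<r. c i * u i^(d-k) * v i^k)) * t^k) =
            (\<Sum>k\<le>d. (if k = 1 then 1 else 0) * t^k)" .
  qed
  then show ?thesis using assms(2) by (subst (asm) polyfun_eq_coeffs) simp
qed


lemma sum_if_single:
  fixes f :: "nat \<Rightarrow> complex"
  assumes "finite A" "j \<in> A"
  shows "(\<Sum>m\<in>A. f m * (if m = j then c else 0)) = f j * c"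
proof -
  have "(\<Sum>m\<in>A. f m * (if m = j then c else 0)) = (\<Sum>m\<in>A. if m = j then f m * c else 0)"
    by (rule sum.cong) auto
  also have "\<dots> = f j * c" using assms by (simp add: sum.delta)
  finally show ?thesis .
qed

lemma L_weighted:
  fixes a b u v p q g :: "nat \<Rightarrow> complex"
  shows "(\<Sum>i<r. (\<Sum>m<d. (a i * p m + b i * q m) * u i^(d-1-m) * v i^m) * g i) =
    (\<Sum>m<d. p m * (\<Sum>i<r. a i * g i * u i^(d-1-m) * v i^m) + q m * (\<Sum>i<r. b i * g i * u i^(d-1-m) * v i^m))"
proof -
  have "(\<Sum>i<r. (\<Sum>m<d. (a i * p m + b i * q m) * u i^(d-1-m) * v i^m) * g i) =
        (\<Sum>i<r. \<Sum>m<d. p m * (a i * g i * u i^(d-1-m) * v i^m) + q m * (b i * g i * u i^(d-1-m) * v i^m))"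
    by (simp add: sum_distrib_right sum_distrib_left algebra_simps)
  also have "\<dots> = (\<Sum>m<d. \<Sum>i<r. p m * (a i * g i * u i^(d-1-m) * v i^m) + q m * (b i * g i * u i^(d-1-m) * v i^m))"
    by (rule sum.swap)
  also have "\<dots> = (\<Sum>m<d. p m * (\<Sum>i<r. a i * g i * u i^(d-1-m) * v i^m) + q m * (\<Sum>i<r. b i * g i * u i^(d-1-m) * v i^m))"
    by (simp add: sum.distrib sum_distrib_left)
  finally show ?thesis .
qed


lemma lower_bound:
  fixes a b u v :: "nat \<Rightarrow> complex"
  assumes d: "2 \<le> d"
  and H: "\<forall>x y x' y'. x * y * (x' ^ (d - 1) * y') = (\<Sum>i<r. (a i * x + b i * y)^2 * (u i * x' + v i * y')^d)"
  shows "2 * d \<le> r"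
proof -
  have H1: "\<forall>t. (\<Sum>i<r. (a i)^2 * (u i + v i * t)^d) = 0"
  proof
    fix t :: complex
    from H[rule_format, of 1 0 1 t] show "(\<Sum>i<r. (a i)^2 * (u i + v i * t)^d) = 0" by simp
  qed
  have H2: "\<forall>t. (\<Sum>i<r. (b i)^2 * (u i + v i * t)^d) = 0"
  proof
    fix t :: complex
    from H[rule_format, of 0 1 1 t] show "(\<Sum>i<r. (b i)^2 * (u i + v i * t)^d) = 0" by simp
  qed
  have H3: "\<forall>t. (\<Sum>i<r. (2 * a i * b i) * (u i + v i * t)^d) = t"
  proof
    fix t :: complex
    let ?X = "\<lambda>i. (u i + v i * t)^d"
    from H[rule_format, of 1 1 1 t] have "t = (\<Sum>i<r. (a i + b i)^2 * ?X i)" by simp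
    also have "\<dots> = (\<Sum>i<r. (a i)^2 * ?X i) + (\<Sum>i<r. (2 * a i * b i) * ?X i) + (\<Sum>i<r. (b i)^2 * ?X i)"
      by (simp add: sum.distrib[symmetric] power2_sum algebra_simps)
    finally show "(\<Sum>i<r. (2 * a i * b i) * ?X i) = t" using H1 H2 by simp
  qed
  define Maa where "Maa k = (\<Sum>i<r. (a i)^2 * u i^(d-k) * v i^k)" for k
  define Mbb where "Mbb k = (\<Sum>i<r. (b i)^2 * u i^(d-k) * v i^k)" for k
  define Mab where "Mab k = (\<Sum>i<r. a i * b i * u i^(d-k) * v i^k)" for k
  have Maa0: "Maa k = 0" if "k \<le> d" for k
    unfolding Maa_def using coeffs_zero[OF H1 that] .
  have Mbb0: "Mbb k = 0" if "k \<le> d" for k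
    unfolding Mbb_def using coeffs_zero[OF H2 that] .
  have Mab1: "Mab k = (if k = 1 then 1 / (2 * of_nat d) else 0)" if "k \<le> d" for k
  proof -
    have e: "of_nat (d choose k) * (\<Sum>i<r. (2 * a i * b i) * u i^(d-k) * v i^k) = (if k = 1 then 1 else 0)"
      using coeffs_lin[OF H3 that] d by simp
    have s: "(\<Sum>i<r. (2 * a i * b i) * u i^(d-k) * v i^k) = 2 * Mab k"
      unfolding Mab_def by (simp add: sum_distrib_left mult_ac)
    show ?thesis
    proof (cases "k = 1")
      case True
      then have "of_nat d * (2 * Mab k) = 1" using e s by simp
      then show ?thesis using True d by (simp add: field_simps)
    next
      case False
      have "(of_nat (d choose k) :: complex) \<noteq> 0" using that by simp
      then show ?thesis using e s False by simp
    qed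
  qed
  define L where "L p q i = (\<Sum>m<d. (a i * p m + b i * q m) * u i^(d-1-m) * v i^m)" for p q :: "nat \<Rightarrow> complex" and i
  have pw1: "u i^(d-1-m) * u i = u i^(d-m)" if "m < d" for i m
  proof -
    have "d - m = Suc (d - 1 - m)" using that by simp
    then show ?thesis by (simp add: mult.commute)
  qed
  have pw2: "u i^(d-1-m) = u i^(d - Suc m)" for i m by simp
  have idbu: "(\<Sum>i<r. L p q i * (b i * u i)) = p 1 / (2 * of_nat d)" for p q
  proof -
    have "(\<Sum>i<r. L p q i * (b i * u i)) = (\<Sum>m<d. p m * (\<Sum>i<r. a i * (b i * u i) * u i^(d-1-m) * v i^m) + q m * (\<Sum>i<r. b i * (b i * u i) * u i^(d-1-m) * v i^m))"
      unfolding L_def by (rule L_weighted)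
    also have "\<dots> = (\<Sum>m<d. p m * Mab m + q m * Mbb m)"
    proof (rule sum.cong[OF refl])
      fix m assume m: "m \<in> {..<d}"
      have "(\<Sum>i<r. a i * (b i * u i) * u i^(d-1-m) * v i^m) = Mab m"
        unfolding Mab_def using pw1[of m] m by (intro sum.cong) (auto simp: mult_ac)
      moreover have "(\<Sum>i<r. b i * (b i * u i) * u i^(d-1-m) * v i^m) = Mbb m"
        unfolding Mbb_def using pw1[of m] m by (intro sum.cong) (auto simp: mult_ac power2_eq_square)
      ultimately show "p m * (\<Sum>i<r. a i * (b i * u i) * u i^(d-1-m) * v i^m) + q m * (\<Sum>i<r. b i * (b i * u i) * u i^(d-1-m) * v i^m) = p m * Mab m + q m * Mbb m" by simp
    qed
    also have "\<dots> = (\<Sum>m<d. p m * (if m = 1 then 1 / (2 * of_nat d) else 0))"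
      by (rule sum.cong) (auto simp: Mab1 Mbb0)
    also have "\<dots> = p 1 / (2 * of_nat d)" using d by (subst sum_if_single) auto
    finally show ?thesis .
  qed
  have idau: "(\<Sum>i<r. L p q i * (a i * u i)) = q 1 / (2 * of_nat d)" for p q
  proof -
    have "(\<Sum>i<r. L p q i * (a i * u i)) = (\<Sum>m<d. p m * (\<Sum>i<r. a i * (a i * u i) * u i^(d-1-m) * v i^m) + q m * (\<Sum>i<r. b i * (a i * u i) * u i^(d-1-m) * v i^m))"
      unfolding L_def by (rule L_weighted)
    also have "\<dots> = (\<Sum>m<d. p m * Maa m + q m * Mab m)"
    proof (rule sum.cong[OF refl])
      fix m assume m: "m \<in> {..<d}"
      have "(\<Sum>i<r. a i * (a i * u i) * u i^(d-1-m) * v i^m) = Maa m"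
        unfolding Maa_def using pw1[of m] m by (intro sum.cong) (auto simp: mult_ac power2_eq_square)
      moreover have "(\<Sum>i<r. b i * (a i * u i) * u i^(d-1-m) * v i^m) = Mab m"
        unfolding Mab_def using pw1[of m] m by (intro sum.cong) (auto simp: mult_ac)
      ultimately show "p m * (\<Sum>i<r. a i * (a i * u i) * u i^(d-1-m) * v i^m) + q m * (\<Sum>i<r. b i * (a i * u i) * u i^(d-1-m) * v i^m) = p m * Maa m + q m * Mab m" by simp
    qed
    also have "\<dots> = (\<Sum>m<d. q m * (if m = 1 then 1 / (2 * of_nat d) else 0))"
      by (rule sum.cong) (auto simp: Mab1 Maa0)
    also have "\<dots> = q 1 / (2 * of_nat d)" using d by (subst sum_if_single) auto
    finally show ?thesis .
  qed
  have idbv: "(\<Sum>i<r. L p q i * (b i * v i)) = p 0 / (2 * of_nat d)" for p q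
  proof -
    have "(\<Sum>i<r. L p q i * (b i * v i)) = (\<Sum>m<d. p m * (\<Sum>i<r. a i * (b i * v i) * u i^(d-1-m) * v i^m) + q m * (\<Sum>i<r. b i * (b i * v i) * u i^(d-1-m) * v i^m))"
      unfolding L_def by (rule L_weighted)
    also have "\<dots> = (\<Sum>m<d. p m * Mab (Suc m) + q m * Mbb (Suc m))"
    proof (rule sum.cong[OF refl])
      fix m assume m: "m \<in> {..<d}"
      have "(\<Sum>i<r. a i * (b i * v i) * u i^(d-1-m) * v i^m) = Mab (Suc m)"
        unfolding Mab_def using m by (intro sum.cong) (auto simp: mult_ac)
      moreover have "(\<Sum>i<r. b i * (b i * v i) * u i^(d-1-m) * v i^m) = Mbb (Suc m)"
        unfolding Mbb_def using m by (intro sum.cong) (auto simp: mult_ac power2_eq_square)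
      ultimately show "p m * (\<Sum>i<r. a i * (b i * v i) * u i^(d-1-m) * v i^m) + q m * (\<Sum>i<r. b i * (b i * v i) * u i^(d-1-m) * v i^m) = p m * Mab (Suc m) + q m * Mbb (Suc m)" by simp
    qed
    also have "\<dots> = (\<Sum>m<d. p m * (if m = 0 then 1 / (2 * of_nat d) else 0))"
      by (rule sum.cong) (auto simp: Mab1 Mbb0)
    also have "\<dots> = p 0 / (2 * of_nat d)" using d by (subst sum_if_single) auto
    finally show ?thesis .
  qed
  have idav: "(\<Sum>i<r. L p q i * (a i * v i)) = q 0 / (2 * of_nat d)" for p q
  proof -
    have "(\<Sum>i<r. L p q i * (a i * v i)) = (\<Sum>m<d. p m * (\<Sum>i<r. a i * (a i * v i) * u i^(d-1-m) * v i^m) + q m * (\<Sum>i<r. b i * (a i * v i) * u i^(d-1-m) * v i^m))"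
      unfolding L_def by (rule L_weighted)
    also have "\<dots> = (\<Sum>m<d. p m * Maa (Suc m) + q m * Mab (Suc m))"
    proof (rule sum.cong[OF refl])
      fix m assume m: "m \<in> {..<d}"
      have "(\<Sum>i<r. a i * (a i * v i) * u i^(d-1-m) * v i^m) = Maa (Suc m)"
        unfolding Maa_def using m by (intro sum.cong) (auto simp: mult_ac power2_eq_square)
      moreover have "(\<Sum>i<r. b i * (a i * v i) * u i^(d-1-m) * v i^m) = Mab (Suc m)"
        unfolding Mab_def using m by (intro sum.cong) (auto simp: mult_ac)
      ultimately show "p m * (\<Sum>i<r. a i * (a i * v i) * u i^(d-1-m) * v i^m) + q m * (\<Sum>i<r. b i * (a i * v i) * u i^(d-1-m) * v i^m) = p m * Maa (Suc m) + q m * Mab (Suc m)" by simp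
    qed
    also have "\<dots> = (\<Sum>m<d. q m * (if m = 0 then 1 / (2 * of_nat d) else 0))"
      by (rule sum.cong) (auto simp: Mab1 Maa0)
    also have "\<dots> = q 0 / (2 * of_nat d)" using d by (subst sum_if_single) auto
    finally show ?thesis .
  qed
  have sol01: "p 0 = 0 \<and> q 0 = 0 \<and> p 1 = 0 \<and> q 1 = 0" if "\<forall>i<r. L p q i = 0" for p q
  proof -
    have z: "(\<Sum>i<r. L p q i * g i) = 0" for g using that by simp
    have dn: "(2 * of_nat d :: complex) \<noteq> 0" using d by simp
    show ?thesis using z[of "\<lambda>i. b i * u i"] z[of "\<lambda>i. a i * u i"] z[of "\<lambda>i. b i * v i"] z[of "\<lambda>i. a i * v i"]
      idbu[of p q] idau[of p q] idbv[of p q] idav[of p q] dn by simp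
  qed
  obtain d' where dd: "d = Suc d'" using d by (cases d) auto
  have inj: "\<forall>p q. (\<forall>m\<ge>d. p m = 0 \<and> q m = 0) \<longrightarrow> (\<forall>i<r. L p q i = 0) \<longrightarrow> p n = 0 \<and> q n = 0" for n
  proof (induction n)
    case 0
    show ?case using sol01 by blast
  next
    case (Suc n)
    show ?case
    proof (intro allI impI)
      fix p q :: "nat \<Rightarrow> complex"
      assume sup: "\<forall>m\<ge>d. p m = 0 \<and> q m = 0" and sol: "\<forall>i<r. L p q i = 0"
      have z: "p 0 = 0 \<and> q 0 = 0 \<and> p 1 = 0 \<and> q 1 = 0" using sol01 sol by blast
      define p' where "p' j = p (Suc j)" for j
      define q' where "q' j = q (Suc j)" for j
      have sup': "\<forall>m\<ge>d. p' m = 0 \<and> q' m = 0" using sup by (simp add: p'_def q'_def)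
      have sol': "\<forall>i<r. L p' q' i = 0"
      proof (intro allI impI)
        fix i assume i: "i < r"
        define c where "c m = a i * p m + b i * q m" for m
        have Lc: "L p q i = (\<Sum>m<d. c m * u i^(d-1-m) * v i^m)" by (simp add: L_def c_def)
        have Lc': "L p' q' i = (\<Sum>m<d. c (Suc m) * u i^(d-1-m) * v i^m)" by (simp add: L_def c_def p'_def q'_def)
        have c0: "c 0 = 0" "c (Suc 0) = 0" "c (Suc d') = 0" using z sup dd by (auto simp: c_def)
        show "L p' q' i = 0"
        proof (cases "v i = 0")
          case True
          have "L p' q' i = c (Suc 0) * u i^(d-1)" unfolding Lc' dd using True
            by (subst sum.lessThan_Suc_shift) simp
          then show ?thesis using c0 by simp
        next
          case False
          have "v i * L p' q' i = (\<Sum>m<Suc d'. c (Suc m) * u i^(d'-m) * v i^(Suc m))"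
            unfolding Lc' dd by (simp add: sum_distrib_left distrib_left mult_ac)
          also have "\<dots> = (\<Sum>m<d'. c (Suc m) * u i^(d'-m) * v i^(Suc m))"
            using c0(3) by simp
          also have "\<dots> = (\<Sum>m<Suc d'. c m * u i^(Suc d' - m) * v i^m)"
            using c0(1) by (subst sum.lessThan_Suc_shift) simp
          also have "\<dots> = u i * L p q i"
            unfolding Lc dd sum_distrib_left
          proof (rule sum.cong[OF refl])
            fix m assume "m \<in> {..<Suc d'}"
            then have "Suc d' - m = Suc (d' - m)" by auto
            then show "c m * u i^(Suc d' - m) * v i^m = u i * (c m * u i^(Suc d' - 1 - m) * v i^m)"
              by (simp add: mult_ac)
          qed
          finally have "v i * L p' q' i = 0" using sol i by simp
          then show ?thesis using False by simp
        qed
      qed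
      from Suc.IH sup' sol' have "p' n = 0 \<and> q' n = 0" by blast
      then show "p (Suc n) = 0 \<and> q (Suc n) = 0" by (simp add: p'_def q'_def)
    qed
  qed
  show ?thesis
  proof (rule ccontr)
    assume "\<not> 2 * d \<le> r"
    then have r: "r < card ({..<d} \<times> (UNIV :: bool set))" by (simp add: card_cartesian_product)
    define A where "A i jm = (case jm of (m, e) \<Rightarrow> (if e then a i else b i) * u i^(d-1-m) * v i^m)" for i jm
    obtain x where x: "\<exists>j\<in>{..<d} \<times> (UNIV :: bool set). x j \<noteq> 0"
      "\<forall>i<r. (\<Sum>j\<in>{..<d} \<times> (UNIV :: bool set). A i j * x j) = 0"
      using homog_exists[OF _ r, of A] by auto
    define p where "p m = (if m < d then x (m, True) else 0)" for m
    define q where "q m = (if m < d then x (m, False) else 0)" for m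
    have Leq: "L p q i = (\<Sum>j\<in>{..<d} \<times> (UNIV :: bool set). A i j * x j)" for i
    proof -
      have "(\<Sum>j\<in>{..<d} \<times> (UNIV :: bool set). A i j * x j) = (\<Sum>m<d. \<Sum>e\<in>(UNIV :: bool set). A i (m, e) * x (m, e))"
        by (simp add: sum.cartesian_product)
      also have "\<dots> = (\<Sum>m<d. (a i * x (m, True) + b i * x (m, False)) * u i^(d-1-m) * v i^m)"
        by (simp add: UNIV_bool A_def algebra_simps)
      also have "\<dots> = L p q i" unfolding L_def by (rule sum.cong) (auto simp: p_def q_def)
      finally show ?thesis by simp
    qed
    have sup: "\<forall>m\<ge>d. p m = 0 \<and> q m = 0" by (simp add: p_def q_def)
    have sol: "\<forall>i<r. L p q i = 0" using x(2) Leq by simp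
    have pq: "p m = 0 \<and> q m = 0" for m
      using inj[of m] sup sol by blast
    have "x (m, e) = 0" if "m < d" for m e
      using that pq[of m] by (cases e) (auto simp: p_def q_def)
    then show False using x(1) by auto
  qed
qed


lemma sum_pairs: "(\<Sum>i<2*(n::nat). f i) = (\<Sum>k<n. f (2*k) + f (2*k+1))"
proof (induction n)
  case 0 then show ?case by simp
next
  case (Suc n)
  have "2 * Suc n = Suc (Suc (2*n))" by simp
  then show ?case using Suc by (simp add: add.assoc)
qed

lemma roots_sum:
  assumes "1 \<le> d"
  shows "(\<Sum>k<d. (exp (2 * of_real pi * \<i> / of_nat d) ^ m) ^ k) = (if d dvd m then of_nat d else 0)"
proof -
  have e: "exp (2 * of_real pi * \<i> / of_nat d) ^ m = exp (2 * of_real pi * \<i> * of_nat m / of_nat d)"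
    by (simp add: exp_of_nat_mult[symmetric] mult_ac)
  show ?thesis
  proof (cases "d dvd m")
    case True
    then show ?thesis using complex_root_unity_eq_1[OF assms, of m] e by simp
  next
    case False
    then have ne: "exp (2 * of_real pi * \<i> * of_nat m / of_nat d) \<noteq> 1"
      using complex_root_unity_eq_1[OF assms, of m] by simp
    have "exp (2 * of_real pi * \<i> * of_nat m / of_nat d) ^ d = 1"
      using complex_root_unity[of d m] assms by simp
    then show ?thesis using False ne e by (simp add: geometric_sum)
  qed
qed

lemma dvd_shift_one:
  fixes d j :: nat
  assumes "2 \<le> d" "j \<le> d" "d dvd (j + d - 1)"
  shows "j = 1"
proof (cases j)
  case 0
  then have "d dvd (d - 1)" using assms by simp
  moreover have "0 < d - 1" "d - 1 < d" using assms by auto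
  ultimately show ?thesis using nat_dvd_not_less by blast
next
  case (Suc j')
  then have "d dvd j'" using assms by (simp add: add.commute)
  moreover have "j' < d" using Suc assms by simp
  ultimately have "j' = 0" using nat_dvd_not_less by (cases j') auto
  then show ?thesis using Suc by simp
qed

lemma waring_W:
  fixes x' y' :: complex
  assumes d: "2 \<le> d"
  defines "w \<equiv> exp (2 * of_real pi * \<i> / of_nat d)"
  shows "(\<Sum>k<d. w^((d-1)*k) * (x' + w^k * y')^d) = (of_nat d)^2 * (x'^(d-1) * y')"
proof -
  have "(\<Sum>k<d. w^((d-1)*k) * (x' + w^k * y')^d) =
        (\<Sum>k<d. \<Sum>j\<le>d. of_nat (d choose j) * y'^j * x'^(d-j) * (w^(j+d-1))^k)"
  proof (rule sum.cong[OF refl])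
    fix k
    have "(x' + w^k * y')^d = (w^k * y' + x')^d" by (simp add: add.commute)
    also have "\<dots> = (\<Sum>j\<le>d. of_nat (d choose j) * (w^k * y')^j * x'^(d-j))"
      by (rule binomial_ring)
    finally have b: "(x' + w^k * y')^d = (\<Sum>j\<le>d. of_nat (d choose j) * (w^k * y')^j * x'^(d-j))" .
    have p: "w^((d-1)*k) * (w^k)^j = (w^(j+d-1))^k" if "j \<le> d" for j
    proof -
      have "j + d - 1 = j + (d - 1)" using d by simp
      then show ?thesis by (simp add: power_mult[symmetric] power_add[symmetric] distrib_left distrib_right mult_ac add_ac)
    qed
    show "w^((d-1)*k) * (x' + w^k * y')^d = (\<Sum>j\<le>d. of_nat (d choose j) * y'^j * x'^(d-j) * (w^(j+d-1))^k)"
      unfolding b sum_distrib_left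
    proof (rule sum.cong[OF refl])
      fix j assume "j \<in> {..d}"
      then have "w^((d-1)*k) * (w^k)^j = (w^(j+d-1))^k" using p by simp
      then show "w^((d-1)*k) * (of_nat (d choose j) * (w^k * y')^j * x'^(d-j)) =
                 of_nat (d choose j) * y'^j * x'^(d-j) * (w^(j+d-1))^k"
        by (simp add: power_mult_distrib mult_ac)
    qed
  qed
  also have "\<dots> = (\<Sum>j\<le>d. \<Sum>k<d. of_nat (d choose j) * y'^j * x'^(d-j) * (w^(j+d-1))^k)"
    by (rule sum.swap)
  also have "\<dots> = (\<Sum>j\<le>d. of_nat (d choose j) * y'^j * x'^(d-j) * (if d dvd (j+d-1) then of_nat d else 0))"
    using d by (simp add: sum_distrib_left[symmetric] roots_sum w_def)
  also have "\<dots> = (\<Sum>j\<le>d. if j = 1 then of_nat d * y' * x'^(d-1) * of_nat d else 0)"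
  proof (rule sum.cong[OF refl])
    fix j assume j: "j \<in> {..d}"
    show "of_nat (d choose j) * y'^j * x'^(d-j) * (if d dvd (j+d-1) then of_nat d else 0) =
          (if j = 1 then of_nat d * y' * x'^(d-1) * of_nat d else 0)"
      using dvd_shift_one[OF d, of j] j by auto
  qed
  also have "\<dots> = (of_nat d)^2 * (x'^(d-1) * y')"
    using d by (simp add: sum.delta power2_eq_square mult_ac)
  finally show ?thesis .
qed


theorem proposition4p4:
  fixes d :: nat
  assumes "d \<ge> 2"
  shows "psrank 2 d (\<lambda>x y x' y'. W 2 x y * W d x' y') = 2 * d"
proof -
  have d: "2 \<le> d" using assms .
  define w where "w = exp (2 * of_real pi * \<i> / of_nat d)"
  define c where "c k = w^((d-1)*k) / (of_nat d)^2" for k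
  define s where "s k = csqrt (c k)" for k
  define v1 where "v1 i = (if even i then (s (i div 2) / 2, s (i div 2) / 2)
                          else (\<i> * s (i div 2) / 2, - \<i> * s (i div 2) / 2))" for i :: nat
  define v2 where "v2 i = ((1::complex), w^(i div 2))" for i :: nat
  have wit: "\<forall>x y x' y'. W 2 x y * W d x' y' =
      (\<Sum>i<2*d. linf (v1 i) x y ^ 2 * linf (v2 i) x' y' ^ d)"
  proof (intro allI)
    fix x y x' y' :: complex
    have q: "(s k / 2 * x + s k / 2 * y)^2 + (\<i> * s k / 2 * x + - \<i> * s k / 2 * y)^2 = c k * (x * y)" for k
    proof -
      have "(s k / 2 * x + s k / 2 * y)^2 + (\<i> * s k / 2 * x + - \<i> * s k / 2 * y)^2 = (s k)^2 * (x * y)"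
        by (simp add: power2_eq_square algebra_simps)
      then show ?thesis by (simp add: s_def)
    qed
    have "(\<Sum>i<2*d. linf (v1 i) x y ^ 2 * linf (v2 i) x' y' ^ d) =
          (\<Sum>k<d. linf (v1 (2*k)) x y ^ 2 * linf (v2 (2*k)) x' y' ^ d +
                  linf (v1 (2*k+1)) x y ^ 2 * linf (v2 (2*k+1)) x' y' ^ d)"
      by (rule sum_pairs)
    also have "\<dots> = (\<Sum>k<d. c k * (x * y) * (x' + w^k * y')^d)"
    proof (rule sum.cong[OF refl])
      fix k
      have "linf (v1 (2*k)) x y ^ 2 * linf (v2 (2*k)) x' y' ^ d +
            linf (v1 (2*k+1)) x y ^ 2 * linf (v2 (2*k+1)) x' y' ^ d =
            ((s k / 2 * x + s k / 2 * y)^2 + (\<i> * s k / 2 * x + - \<i> * s k / 2 * y)^2) * (x' + w^k * y')^d"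
        by (simp add: v1_def v2_def linf_def distrib_right)
      then show "linf (v1 (2*k)) x y ^ 2 * linf (v2 (2*k)) x' y' ^ d +
            linf (v1 (2*k+1)) x y ^ 2 * linf (v2 (2*k+1)) x' y' ^ d = c k * (x * y) * (x' + w^k * y')^d"
        using q[of k] by simp
    qed
    also have "\<dots> = (x * y) / (of_nat d)^2 * (\<Sum>k<d. w^((d-1)*k) * (x' + w^k * y')^d)"
      by (simp add: c_def sum_distrib_left mult_ac)
    also have "\<dots> = (x * y) * (x'^(d-1) * y')"
      using waring_W[OF d, of x' y'] d by (simp add: w_def)
    also have "\<dots> = W 2 x y * W d x' y'" by (simp add: W_def)
    finally show "W 2 x y * W d x' y' = (\<Sum>i<2*d. linf (v1 i) x y ^ 2 * linf (v2 i) x' y' ^ d)" by simp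
  qed
  show ?thesis
    unfolding psrank_def
  proof (rule Least_equality)
    show "\<exists>v1 v2 :: nat \<Rightarrow> complex \<times> complex. \<forall>x y x' y'. W 2 x y * W d x' y' =
      (\<Sum>i<2*d. linf (v1 i) x y ^ 2 * linf (v2 i) x' y' ^ d)"
      using wit by blast
  next
    fix r
    assume "\<exists>v1 v2 :: nat \<Rightarrow> complex \<times> complex. \<forall>x y x' y'. W 2 x y * W d x' y' =
      (\<Sum>i<r. linf (v1 i) x y ^ 2 * linf (v2 i) x' y' ^ d)"
    then obtain V1 V2 :: "nat \<Rightarrow> complex \<times> complex" where
      V: "\<forall>x y x' y'. W 2 x y * W d x' y' = (\<Sum>i<r. linf (V1 i) x y ^ 2 * linf (V2 i) x' y' ^ d)"
      by blast
    have "\<forall>x y x' y'. x * y * (x' ^ (d - 1) * y') =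
       (\<Sum>i<r. (fst (V1 i) * x + snd (V1 i) * y)^2 * (fst (V2 i) * x' + snd (V2 i) * y')^d)"
      using V by (simp add: W_def linf_def)
    then show "2 * d \<le> r" by (rule lower_bound[OF d])
  qed
qed

end
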